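(* Let $G$ be a trigraph containing a fence gadget $F$ attached to a set $S$ and satisfying the attachment rule in $G$ with set $X$, and let $Y=V(G)\setminus(V(F)\cup S\cup X)$. In any partial $4$-sequence from $G$, as long as no contraction has involved two vertices of $V(F)$, no part intersects both $X$ and $S$, no part intersects both $Y$ and $S$, and no part intersects both $X$ and $Y$.
   Context: A trigraph $G$ consists of a vertex set $V(G)$ and two disjoint sets of unordered pairs of distinct vertices: black edges and red edges; the red graph is formed by the red edges. Contracting two distinct vertices $u,v$ replaces them by a new vertex $w$ such that, for every other vertex $z$, $wz$ is black if $uz,vz$ are both black, a non-edge if both are non-edges, and red otherwise. A partial $d$-sequence from $G$ is a sequence of trigraphs starting at $G$, each obtained from the previous by one contraction, all of maximum red degree at most $d$. Each vertex $u$ of a later trigraph corresponds to the set $u(G)$ (its part) of vertices of $G$ merged into it; a contraction of $u,u'$ involves a vertex $v$ of $G$ if $v\in u(G)\cup u'(G)$, and involves a pair $v,v'$ if $v\in u(G),v'\in u'(G)$ or vice versa. A fence gadget is a trigraph $F$ on $A\cup B$, $A=\{a_1,\dots,a_6\}$, $B=\{b_1,\dots,b_6\}$, whose black edges are those of the cycles $a_1a_2a_3a_4a_5a_6a_1$ and $b_1b_2b_3b_4b_5b_6b_1$ together with $b_1a_6$, and whose red edges are $a_ib_i$ for $i\in[6]$ and $a_ib_{i+1}$ for $i\in[5]$. Inside a trigraph $G$, $F$ is attached to a nonempty set $S\subseteq V(G)\setminus V(F)$ if every vertex of $A$ is joined by a black edge to every vertex of $S$ and no vertex of $B$ is adjacent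 to a vertex of $S$. $F$ satisfies the attachment rule in $G$ if $V(F)$ is the vertex set of a connected component of the red graph of $G$ and there is a set $X\subseteq V(G)\setminus(V(F)\cup S)$ such that every vertex of $A$ has exactly $X\cup S$ as its set of neighbours outside $V(F)$, every vertex of $B$ has exactly $X$ as its set of neighbours outside $V(F)$ (all these edges black), and every vertex of $X$ is adjacent to every vertex of $S$. *)

theory Defs
  imports Main
begin

record 'v trigraph =
  verts :: "'v set"
  blk :: "'v set set"
  rd :: "'v set set"

definition wf_trigraph :: "'v trigraph \<Rightarrow> bool" where
  "wf_trigraph G \<longleftrightarrow> finite (verts G)
     \<and> (\<forall>e \<in> blk G \<union> rd G. \<exists>x y. e = {x, y} \<and> x \<noteq> y \<and> x \<in> verts G \<and> y \<in> verts G)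
     \<and> blk G \<inter> rd G = {}"

definition adjacent :: "'v trigraph \<Rightarrow> 'v \<Rightarrow> 'v \<Rightarrow> bool" where
  "adjacent G x y \<longleftrightarrow> {x, y} \<in> blk G \<or> {x, y} \<in> rd G"

definition nonedge :: "'v trigraph \<Rightarrow> 'v \<Rightarrow> 'v \<Rightarrow> bool" where
  "nonedge G x y \<longleftrightarrow> {x, y} \<notin> blk G \<and> {x, y} \<notin> rd G"

text \<open>Lifting: every vertex v of G becomes the part {v}. In the sequences considered,
  every vertex is identified with its part u(G).\<close>
definition lift :: "'v trigraph \<Rightarrow> 'v set trigraph" where
  "lift G = \<lparr> verts = (\<lambda>v. {v}) ` verts G,
              blk = (\<lambda>e. (\<lambda>v. {v}) ` e) ` blk G,
              rd = (\<lambda>e. (\<lambda>v. {v}) ` e) ` rd G \<rparr>"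

definition contract :: "'v set trigraph \<Rightarrow> 'v set \<Rightarrow> 'v set \<Rightarrow> 'v set trigraph" where
  "contract H u v = \<lparr> verts = (verts H - {u, v}) \<union> {u \<union> v},
     blk = {e \<in> blk H. u \<notin> e \<and> v \<notin> e}
           \<union> {{u \<union> v, z} | z. z \<in> verts H - {u, v} \<and> {u, z} \<in> blk H \<and> {v, z} \<in> blk H},
     rd = {e \<in> rd H. u \<notin> e \<and> v \<notin> e}
           \<union> {{u \<union> v, z} | z. z \<in> verts H - {u, v}
                 \<and> \<not> ({u, z} \<in> blk H \<and> {v, z} \<in> blk H)
                 \<and> \<not> (nonedge H u z \<and> nonedge H v z)} \<rparr>"

definition red_deg :: "'a trigraph \<Rightarrow> 'a \<Rightarrow> nat" where
  "red_deg H x = card {y \<in> verts H. {x, y} \<in> rd H}"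

definition partial_seq :: "nat \<Rightarrow> 'v trigraph \<Rightarrow> 'v set trigraph list \<Rightarrow> ('v set \<times> 'v set) list \<Rightarrow> bool" where
  "partial_seq d G Gs cs \<longleftrightarrow>
     length Gs = Suc (length cs) \<and> Gs ! 0 = lift G
     \<and> (\<forall>i < length cs. fst (cs ! i) \<in> verts (Gs ! i) \<and> snd (cs ! i) \<in> verts (Gs ! i)
          \<and> fst (cs ! i) \<noteq> snd (cs ! i)
          \<and> Gs ! Suc i = contract (Gs ! i) (fst (cs ! i)) (snd (cs ! i)))
     \<and> (\<forall>H \<in> set Gs. \<forall>x \<in> verts H. red_deg H x \<le> d)"

definition involves_pair :: "'v set \<times> 'v set \<Rightarrow> 'v \<Rightarrow> 'v \<Rightarrow> bool" where
  "involves_pair c x y \<longleftrightarrow> (x \<in> fst c \<and> y \<in> snd c) \<or> (y \<in> fst c \<and> x \<in> snd c)"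

definition fence_verts :: "(nat \<Rightarrow> 'v) \<Rightarrow> (nat \<Rightarrow> 'v) \<Rightarrow> 'v set" where
  "fence_verts a b = a ` {1..6} \<union> b ` {1..6}"

definition fence_black :: "(nat \<Rightarrow> 'v) \<Rightarrow> (nat \<Rightarrow> 'v) \<Rightarrow> 'v set set" where
  "fence_black a b = {{a i, a (Suc i)} | i. i \<in> {1..5}} \<union> {{a 6, a 1}}
     \<union> {{b i, b (Suc i)} | i. i \<in> {1..5}} \<union> {{b 6, b 1}} \<union> {{b 1, a 6}}"

definition fence_red :: "(nat \<Rightarrow> 'v) \<Rightarrow> (nat \<Rightarrow> 'v) \<Rightarrow> 'v set set" where
  "fence_red a b = {{a i, b i} | i. i \<in> {1..6}} \<union> {{a i, b (Suc i)} | i. i \<in> {1..5}}"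

definition fence_in :: "'v trigraph \<Rightarrow> (nat \<Rightarrow> 'v) \<Rightarrow> (nat \<Rightarrow> 'v) \<Rightarrow> bool" where
  "fence_in G a b \<longleftrightarrow> inj_on a {1..6} \<and> inj_on b {1..6} \<and> a ` {1..6} \<inter> b ` {1..6} = {}
     \<and> fence_verts a b \<subseteq> verts G
     \<and> (\<forall>x \<in> fence_verts a b. \<forall>y \<in> fence_verts a b.
          ({x, y} \<in> blk G \<longleftrightarrow> {x, y} \<in> fence_black a b)
        \<and> ({x, y} \<in> rd G \<longleftrightarrow> {x, y} \<in> fence_red a b))"

definition attached :: "'v trigraph \<Rightarrow> (nat \<Rightarrow> 'v) \<Rightarrow> (nat \<Rightarrow> 'v) \<Rightarrow> 'v set \<Rightarrow> bool" where
  "attached G a b S \<longleftrightarrow> S \<noteq> {} \<and> S \<subseteq> verts G - fence_verts a b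
     \<and> (\<forall>i \<in> {1..6}. \<forall>s \<in> S. {a i, s} \<in> blk G)
     \<and> (\<forall>i \<in> {1..6}. \<forall>s \<in> S. \<not> adjacent G (b i) s)"

definition red_component :: "'v trigraph \<Rightarrow> 'v set \<Rightarrow> bool" where
  "red_component G C \<longleftrightarrow> C \<noteq> {} \<and> C \<subseteq> verts G
     \<and> (\<forall>x \<in> C. \<forall>y \<in> C. (x, y) \<in> {(p, q). p \<in> C \<and> q \<in> C \<and> {p, q} \<in> rd G}\<^sup>*)
     \<and> (\<forall>x \<in> C. \<forall>y \<in> verts G - C. {x, y} \<notin> rd G)"

definition attachment_rule :: "'v trigraph \<Rightarrow> (nat \<Rightarrow> 'v) \<Rightarrow> (nat \<Rightarrow> 'v) \<Rightarrow> 'v set \<Rightarrow> 'v set \<Rightarrow> bool" where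
  "attachment_rule G a b S X \<longleftrightarrow> red_component G (fence_verts a b)
     \<and> X \<subseteq> verts G - (fence_verts a b \<union> S)
     \<and> (\<forall>i \<in> {1..6}. {z \<in> verts G - fence_verts a b. adjacent G (a i) z} = X \<union> S
                    \<and> (\<forall>z \<in> X \<union> S. {a i, z} \<in> blk G))
     \<and> (\<forall>i \<in> {1..6}. {z \<in> verts G - fence_verts a b. adjacent G (b i) z} = X
                    \<and> (\<forall>z \<in> X. {b i, z} \<in> blk G))
     \<and> (\<forall>x \<in> X. \<forall>s \<in> S. adjacent G x s)"

end

theory Submission
  imports Defs
begin

definition pinv :: "'v trigraph \<Rightarrow> 'v set \<Rightarrow> 'v set trigraph \<Rightarrow> bool" where
"pinv G F H \<longleftrightarrow> \<Union>(verts H) = verts G \<and> (\<forall>P\<in>verts H. P \<noteq> {})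
  \<and> (\<forall>P\<in>verts H. \<forall>Q\<in>verts H. P \<noteq> Q \<longrightarrow> P \<inter> Q = {})
  \<and> (\<forall>e\<in>blk H \<union> rd H. e \<subseteq> verts H)
  \<and> (\<forall>P\<in>verts H. \<forall>Q\<in>verts H. P \<noteq> Q \<longrightarrow>
        ({P,Q} \<in> blk H \<longleftrightarrow> (\<forall>p\<in>P. \<forall>q\<in>Q. {p,q} \<in> blk G))
      \<and> (nonedge H P Q \<longleftrightarrow> (\<forall>p\<in>P. \<forall>q\<in>Q. nonedge G p q)))
  \<and> (\<forall>P\<in>verts H. \<forall>x\<in>F. \<forall>y\<in>F. x \<in> P \<longrightarrow> y \<in> P \<longrightarrow> x = y)"

lemma lift_inv:
  assumes wf: "wf_trigraph G"
  shows "pinv G F (lift G)"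
proof -
  let ?s = "\<lambda>v::'a. {v}"
  have inj: "inj (\<lambda>e. ?s ` e)" by (simp add: inj_def inj_image_eq_iff)
  have im: "?s ` {p,q} = {{p},{q}}" for p q by auto
  have blk: "{{p},{q}} \<in> blk (lift G) \<longleftrightarrow> {p,q} \<in> blk G" for p q
    unfolding lift_def using inj_image_mem_iff[OF inj, of "{p,q}" "blk G"] by (simp add: im)
  have rd: "{{p},{q}} \<in> rd (lift G) \<longleftrightarrow> {p,q} \<in> rd G" for p q
    unfolding lift_def using inj_image_mem_iff[OF inj, of "{p,q}" "rd G"] by (simp add: im)
  have edges: "\<forall>e\<in>blk (lift G) \<union> rd (lift G). e \<subseteq> verts (lift G)"
  proof
    fix e assume "e \<in> blk (lift G) \<union> rd (lift G)"
    then obtain e' where e': "e' \<in> blk G \<union> rd G" "e = ?s ` e'" unfolding lift_def by auto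
    have W: "\<forall>e\<in>blk G \<union> rd G. \<exists>x y. e = {x, y} \<and> x \<noteq> y \<and> x \<in> verts G \<and> y \<in> verts G"
      using wf unfolding wf_trigraph_def by (rule conjunct1[OF conjunct2])
    then obtain x y where "e' = {x,y}" "x \<in> verts G" "y \<in> verts G" using e'(1) by meson
    then have "e' \<subseteq> verts G" by simp
    then show "e \<subseteq> verts (lift G)" using e'(2) unfolding lift_def by auto
  qed
  show ?thesis unfolding pinv_def
  proof (intro conjI)
    show "\<forall>e\<in>blk (lift G) \<union> rd (lift G). e \<subseteq> verts (lift G)" by (rule edges)
    show "\<Union> (verts (lift G)) = verts G" by (auto simp: lift_def)
    show "\<forall>P\<in>verts (lift G). P \<noteq> {}" by (auto simp: lift_def)
    show "\<forall>P\<in>verts (lift G). \<forall>Q\<in>verts (lift G). P \<noteq> Q \<longrightarrow> P \<inter> Q = {}" by (auto simp: lift_def)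
    show "\<forall>P\<in>verts (lift G). \<forall>x\<in>F. \<forall>y\<in>F. x \<in> P \<longrightarrow> y \<in> P \<longrightarrow> x = y" by (auto simp: lift_def)
    show "\<forall>P\<in>verts (lift G). \<forall>Q\<in>verts (lift G). P \<noteq> Q \<longrightarrow>
        ({P,Q} \<in> blk (lift G) \<longleftrightarrow> (\<forall>p\<in>P. \<forall>q\<in>Q. {p,q} \<in> blk G))
      \<and> (nonedge (lift G) P Q \<longleftrightarrow> (\<forall>p\<in>P. \<forall>q\<in>Q. nonedge G p q))"
    proof (intro ballI impI)
      fix P Q assume "P \<in> verts (lift G)" "Q \<in> verts (lift G)"
      then obtain p q where "P = {p}" "Q = {q}" by (auto simp: lift_def)
      then show "({P,Q} \<in> blk (lift G) \<longleftrightarrow> (\<forall>p\<in>P. \<forall>q\<in>Q. {p,q} \<in> blk G))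
      \<and> (nonedge (lift G) P Q \<longleftrightarrow> (\<forall>p\<in>P. \<forall>q\<in>Q. nonedge G p q))"
        by (simp add: blk rd nonedge_def)
    qed
  qed
qed



lemma contract_inv:
  assumes I: "pinv G F H" and u: "u \<in> verts H" and v: "v \<in> verts H" and uv: "u \<noteq> v"
    and nf: "\<forall>x\<in>F. \<forall>y\<in>F. \<not> involves_pair (u,v) x y"
  shows "pinv G F (contract H u v)"
proof -
  let ?w = "u \<union> v"
  let ?H = "contract H u v"
  have disj: "u \<inter> v = {}" using I u v uv by (auto simp: pinv_def)
  have ne: "u \<noteq> {}" "v \<noteq> {}" using I u v by (auto simp: pinv_def)
  have wnot: "?w \<notin> verts H"
  proof
    assume wH: "?w \<in> verts H"
    show False
    proof (cases "?w = u")
      case True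
      then have "v \<subseteq> u" by auto
      then show False using disj ne by auto
    next
      case False
      have D: "\<forall>P\<in>verts H. \<forall>Q\<in>verts H. P \<noteq> Q \<longrightarrow> P \<inter> Q = {}" using I by (simp add: pinv_def)
      have "?w \<inter> u = {}" using D wH u False by (simp only: Ball_def) blast
      then show False using ne by auto
    qed
  qed
  have edgesH: "\<forall>e\<in>blk H \<union> rd H. e \<subseteq> verts H" using I by (simp add: pinv_def)
  have vH: "verts ?H = verts H - {u,v} \<union> {?w}" by (simp add: contract_def)
  have wz_blk: "{?w, z} \<in> blk ?H \<longleftrightarrow> {u,z} \<in> blk H \<and> {v,z} \<in> blk H" if z: "z \<in> verts H - {u,v}" for z
  proof -
    have "{?w, z} \<notin> blk H" using edgesH wnot by blast
    moreover have "?w \<noteq> z" using z wnot by auto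
    ultimately show ?thesis using z by (auto simp: contract_def doubleton_eq_iff)
  qed
  have wz_rd: "{?w, z} \<in> rd ?H \<longleftrightarrow> \<not> ({u,z} \<in> blk H \<and> {v,z} \<in> blk H) \<and> \<not> (nonedge H u z \<and> nonedge H v z)"
    if z: "z \<in> verts H - {u,v}" for z
  proof -
    have "{?w, z} \<notin> rd H" using edgesH wnot by blast
    moreover have "?w \<noteq> z" using z wnot by auto
    ultimately show ?thesis using z by (auto simp: contract_def doubleton_eq_iff)
  qed
  have pq_blk: "{P,Q} \<in> blk ?H \<longleftrightarrow> {P,Q} \<in> blk H" if "P \<in> verts H - {u,v}" "Q \<in> verts H - {u,v}" for P Q
  proof -
    have "?w \<notin> {P,Q}" using that wnot by auto
    then show ?thesis using that by (auto simp: contract_def doubleton_eq_iff)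
  qed
  have pq_rd: "{P,Q} \<in> rd ?H \<longleftrightarrow> {P,Q} \<in> rd H" if "P \<in> verts H - {u,v}" "Q \<in> verts H - {u,v}" for P Q
  proof -
    have "?w \<notin> {P,Q}" using that wnot by auto
    then show ?thesis using that by (auto simp: contract_def doubleton_eq_iff)
  qed
  have Iedge: "\<And>P Q. P \<in> verts H \<Longrightarrow> Q \<in> verts H \<Longrightarrow> P \<noteq> Q \<Longrightarrow>
        ({P,Q} \<in> blk H \<longleftrightarrow> (\<forall>p\<in>P. \<forall>q\<in>Q. {p,q} \<in> blk G))
      \<and> (nonedge H P Q \<longleftrightarrow> (\<forall>p\<in>P. \<forall>q\<in>Q. nonedge G p q))"
  proof -
    fix P Q assume PQ: "P \<in> verts H" "Q \<in> verts H" "P \<noteq> Q"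
    have ALL: "\<forall>P\<in>verts H. \<forall>Q\<in>verts H. P \<noteq> Q \<longrightarrow>
        ({P,Q} \<in> blk H \<longleftrightarrow> (\<forall>p\<in>P. \<forall>q\<in>Q. {p,q} \<in> blk G))
      \<and> (nonedge H P Q \<longleftrightarrow> (\<forall>p\<in>P. \<forall>q\<in>Q. nonedge G p q))"
      using I by (simp add: pinv_def)
    show "({P,Q} \<in> blk H \<longleftrightarrow> (\<forall>p\<in>P. \<forall>q\<in>Q. {p,q} \<in> blk G))
      \<and> (nonedge H P Q \<longleftrightarrow> (\<forall>p\<in>P. \<forall>q\<in>Q. nonedge G p q))" by (rule ALL[rule_format, OF PQ])
  qed
  have wz: "({?w,z} \<in> blk ?H \<longleftrightarrow> (\<forall>p\<in>?w. \<forall>q\<in>z. {p,q} \<in> blk G))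
      \<and> (nonedge ?H ?w z \<longleftrightarrow> (\<forall>p\<in>?w. \<forall>q\<in>z. nonedge G p q))" if z: "z \<in> verts H - {u,v}" for z
  proof -
    have zu: "z \<noteq> u" "z \<noteq> v" "z \<in> verts H" using z by auto
    have A: "({u,z} \<in> blk H \<longleftrightarrow> (\<forall>p\<in>u. \<forall>q\<in>z. {p,q} \<in> blk G))
      \<and> (nonedge H u z \<longleftrightarrow> (\<forall>p\<in>u. \<forall>q\<in>z. nonedge G p q))" using Iedge[OF u zu(3)] zu by auto
    have B: "({v,z} \<in> blk H \<longleftrightarrow> (\<forall>p\<in>v. \<forall>q\<in>z. {p,q} \<in> blk G))
      \<and> (nonedge H v z \<longleftrightarrow> (\<forall>p\<in>v. \<forall>q\<in>z. nonedge G p q))" using Iedge[OF v zu(3)] zu by auto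
    have nb: "nonedge H u z \<Longrightarrow> {u,z} \<notin> blk H" by (simp add: nonedge_def)
    have E: "nonedge ?H ?w z \<longleftrightarrow> {?w,z} \<notin> blk ?H \<and> {?w,z} \<notin> rd ?H" by (simp add: nonedge_def)
    have N: "nonedge ?H ?w z \<longleftrightarrow> nonedge H u z \<and> nonedge H v z"
      unfolding E wz_blk[OF z] wz_rd[OF z] using nb by blast
    show ?thesis unfolding N wz_blk[OF z] using A B by (simp add: ball_Un)
  qed
  show ?thesis unfolding pinv_def
  proof (intro conjI)
    have U: "\<Union> (verts H) = verts G" using I by (simp add: pinv_def)
    have NE: "\<forall>P\<in>verts H. P \<noteq> {}" using I by (simp add: pinv_def)
    have D: "\<forall>P\<in>verts H. \<forall>Q\<in>verts H. P \<noteq> Q \<longrightarrow> P \<inter> Q = {}" using I by (simp add: pinv_def)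
    have FF: "\<forall>P\<in>verts H. \<forall>x\<in>F. \<forall>y\<in>F. x \<in> P \<longrightarrow> y \<in> P \<longrightarrow> x = y" using I by (simp add: pinv_def)
    show "\<Union> (verts ?H) = verts G" using U u v unfolding vH by blast
    show "\<forall>P\<in>verts ?H. P \<noteq> {}" using NE ne unfolding vH by blast
    show "\<forall>P\<in>verts ?H. \<forall>Q\<in>verts ?H. P \<noteq> Q \<longrightarrow> P \<inter> Q = {}"
      using D u v unfolding vH by blast
    show "\<forall>e\<in>blk ?H \<union> rd ?H. e \<subseteq> verts ?H"
      using edgesH by (auto simp: contract_def)
    show "\<forall>P\<in>verts ?H. \<forall>x\<in>F. \<forall>y\<in>F. x \<in> P \<longrightarrow> y \<in> P \<longrightarrow> x = y"
    proof (intro ballI impI)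
      fix P x y assume P: "P \<in> verts ?H" and xy: "x \<in> F" "y \<in> F" "x \<in> P" "y \<in> P"
      show "x = y"
      proof (cases "P = ?w")
        case True
        then have "x \<in> u \<and> y \<in> u \<or> x \<in> v \<and> y \<in> v" using xy nf unfolding involves_pair_def by auto
        then show ?thesis using FF u v xy by blast
      next
        case False
        then have "P \<in> verts H" using P vH by auto
        then show ?thesis using xy FF by blast
      qed
    qed
    show "\<forall>P\<in>verts ?H. \<forall>Q\<in>verts ?H. P \<noteq> Q \<longrightarrow>
        ({P,Q} \<in> blk ?H \<longleftrightarrow> (\<forall>p\<in>P. \<forall>q\<in>Q. {p,q} \<in> blk G))
      \<and> (nonedge ?H P Q \<longleftrightarrow> (\<forall>p\<in>P. \<forall>q\<in>Q. nonedge G p q))"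
    proof (intro ballI impI)
      fix P Q assume P: "P \<in> verts ?H" and Q: "Q \<in> verts ?H" and PQ: "P \<noteq> Q"
      show "({P,Q} \<in> blk ?H \<longleftrightarrow> (\<forall>p\<in>P. \<forall>q\<in>Q. {p,q} \<in> blk G))
      \<and> (nonedge ?H P Q \<longleftrightarrow> (\<forall>p\<in>P. \<forall>q\<in>Q. nonedge G p q))"
      proof (cases "P = ?w")
        case True
        then have Q': "Q \<in> verts H - {u,v}" using Q PQ vH by auto
        then show ?thesis using wz[OF Q'] True by simp
      next
        case Pn: False
        show ?thesis
        proof (cases "Q = ?w")
          case True
          then have P': "P \<in> verts H - {u,v}" using P Pn vH by auto
          have c1: "{P,Q} = {?w,P}" using True by auto
          have c2: "nonedge ?H P Q = nonedge ?H ?w P" using True by (simp add: nonedge_def insert_commute)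
          have c3: "nonedge G p q = nonedge G q p" for p q by (simp add: nonedge_def insert_commute)
          have c4: "{p,q} = {q,p}" for p q :: 'a by auto
          show ?thesis unfolding c1 c2 using wz[OF P'] True c3 c4 by metis
        next
          case False
          then have P': "P \<in> verts H - {u,v}" and Q': "Q \<in> verts H - {u,v}" using P Q Pn vH by auto
          have "nonedge ?H P Q = nonedge H P Q"
            using pq_blk[OF P' Q'] pq_rd[OF P' Q'] by (simp add: nonedge_def)
          then show ?thesis using pq_blk[OF P' Q'] Iedge[of P Q] P' Q' PQ by simp
        qed
      qed
    qed
  qed
qed



lemma pinv_finite:
  assumes I: "pinv G F H" and fin: "finite (verts G)"
  shows "finite (verts H)"
proof -
  have U: "\<Union> (verts H) = verts G" using I by (simp add: pinv_def)
  have "verts H \<subseteq> Pow (verts G)" using U by blast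
  then show ?thesis using fin by (meson finite_Pow_iff finite_subset)
qed

lemma red5:
  assumes I: "pinv G F H" and fin: "finite (verts G)" and P: "P \<in> verts H"
    and injf: "inj_on f {1..6::nat}" and fF: "f ` {1..6} \<subseteq> F" and fG: "f ` {1..6} \<subseteq> verts G"
    and p: "p \<in> P" and q: "q \<in> P"
    and hb: "\<forall>j\<in>{1..6}. {f j, p} \<in> blk G" and hn: "\<forall>j\<in>{1..6}. \<not> adjacent G (f j) q"
  shows "5 \<le> red_deg H P"
proof -
  have U: "\<Union> (verts H) = verts G" using I by (simp add: pinv_def)
  have FF: "\<forall>P\<in>verts H. \<forall>x\<in>F. \<forall>y\<in>F. x \<in> P \<longrightarrow> y \<in> P \<longrightarrow> x = y" using I by (simp add: pinv_def)
  have ALL: "\<forall>P\<in>verts H. \<forall>Q\<in>verts H. P \<noteq> Q \<longrightarrow>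
        ({P,Q} \<in> blk H \<longleftrightarrow> (\<forall>p\<in>P. \<forall>q\<in>Q. {p,q} \<in> blk G))
      \<and> (nonedge H P Q \<longleftrightarrow> (\<forall>p\<in>P. \<forall>q\<in>Q. nonedge G p q))"
    using I by (simp add: pinv_def)
  define Q where "Q j = (SOME R. R \<in> verts H \<and> f j \<in> R)" for j
  have Qj: "Q j \<in> verts H \<and> f j \<in> Q j" if j: "j \<in> {1..6}" for j
  proof -
    have "f j \<in> verts G" using fG j by blast
    then have "\<exists>R. R \<in> verts H \<and> f j \<in> R" using U by blast
    then show ?thesis unfolding Q_def by (rule someI_ex)
  qed
  have injQ: "Q j = Q k \<Longrightarrow> j = k" if "j \<in> {1..6}" "k \<in> {1..6}" for j k
  proof -
    assume e: "Q j = Q k"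
    have "f j \<in> F" "f k \<in> F" using fF that by auto
    then have "f j = f k" using FF Qj[OF that(1)] Qj[OF that(2)] e by metis
    then show "j = k" using injf that by (meson inj_on_eq_iff)
  qed
  define J where "J = {j\<in>{1..6}. Q j \<noteq> P}"
  have cardJ: "5 \<le> card J"
  proof (cases "\<exists>j0\<in>{1..6}. Q j0 = P")
    case True
    then obtain j0 where j0: "j0 \<in> {1..6}" "Q j0 = P" by blast
    have "J = {1..6} - {j0}" unfolding J_def using injQ j0 by auto
    then show ?thesis using j0 by simp
  next
    case False
    then have "J = {1..6}" unfolding J_def by auto
    then show ?thesis by simp
  qed
  have injJ: "inj_on Q J" unfolding J_def inj_on_def using injQ by blast
  have sub: "Q ` J \<subseteq> {y \<in> verts H. {P, y} \<in> rd H}"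
  proof
    fix R assume "R \<in> Q ` J"
    then obtain j where j: "j \<in> {1..6}" "Q j \<noteq> P" "R = Q j" unfolding J_def by blast
    have R: "R \<in> verts H" "f j \<in> R" using Qj[OF j(1)] j(3) by auto
    have PR: "P \<noteq> R" using j by auto
    have c: "({P,R} \<in> blk H \<longleftrightarrow> (\<forall>p\<in>P. \<forall>q\<in>R. {p,q} \<in> blk G))
      \<and> (nonedge H P R \<longleftrightarrow> (\<forall>p\<in>P. \<forall>q\<in>R. nonedge G p q))"
      by (rule ALL[rule_format, OF P R(1) PR])
    have "{f j, p} \<in> blk G" using hb j by blast
    then have "\<not> nonedge G p (f j)" by (simp add: nonedge_def insert_commute)
    then have n1: "\<not> nonedge H P R" using c p R(2) by blast
    have "\<not> adjacent G (f j) q" using hn j by blast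
    then have "{q, f j} \<notin> blk G" by (simp add: adjacent_def insert_commute)
    then have n2: "{P,R} \<notin> blk H" using c q R(2) by blast
    have "{P,R} \<in> rd H" using n1 n2 by (simp add: nonedge_def)
    then show "R \<in> {y \<in> verts H. {P, y} \<in> rd H}" using R by simp
  qed
  have finH: "finite {y \<in> verts H. {P, y} \<in> rd H}" using pinv_finite[OF I fin] by simp
  have "card (Q ` J) = card J" using injJ by (simp add: card_image)
  then have "5 \<le> card (Q ` J)" using cardJ by simp
  also have "\<dots> \<le> card {y \<in> verts H. {P, y} \<in> rd H}" by (rule card_mono[OF finH sub])
  finally show ?thesis unfolding red_deg_def .
qed



theorem lemma4p7:
  fixes G :: "'v trigraph" and a b :: "nat \<Rightarrow> 'v" and S X Y :: "'v set"
    and Gs :: "'v set trigraph list" and cs :: "('v set \<times> 'v set) list"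
  assumes "wf_trigraph G"
    and "fence_in G a b"
    and "attached G a b S"
    and "attachment_rule G a b S X"
    and "Y = verts G - (fence_verts a b \<union> S \<union> X)"
    and "partial_seq 4 G Gs cs"
    and "\<forall>i < length cs. \<not> (\<exists>x \<in> fence_verts a b. \<exists>y \<in> fence_verts a b. involves_pair (cs ! i) x y)"
  shows "\<forall>H \<in> set Gs. \<forall>P \<in> verts H.
           \<not> (P \<inter> X \<noteq> {} \<and> P \<inter> S \<noteq> {})
         \<and> \<not> (P \<inter> Y \<noteq> {} \<and> P \<inter> S \<noteq> {})
         \<and> \<not> (P \<inter> X \<noteq> {} \<and> P \<inter> Y \<noteq> {})"
proof -
  note wf = assms(1) and fi = assms(2) and att = assms(3) and ar = assms(4) and Ydef = assms(5)
    and ps = assms(6) and nf = assms(7)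
  let ?F = "fence_verts a b"
  have fin: "finite (verts G)" using wf by (simp add: wf_trigraph_def)
  have len: "length Gs = Suc (length cs)" and G0: "Gs ! 0 = lift G"
    and step: "\<forall>i < length cs. fst (cs ! i) \<in> verts (Gs ! i) \<and> snd (cs ! i) \<in> verts (Gs ! i)
          \<and> fst (cs ! i) \<noteq> snd (cs ! i)
          \<and> Gs ! Suc i = contract (Gs ! i) (fst (cs ! i)) (snd (cs ! i))"
    and deg: "\<forall>H \<in> set Gs. \<forall>x \<in> verts H. red_deg H x \<le> 4"
    using ps unfolding partial_seq_def by auto
  have inv: "pinv G ?F (Gs ! i)" if "i < length Gs" for i
    using that
  proof (induction i)
    case 0
    then show ?case using G0 lift_inv[OF wf] by simp
  next
    case (Suc i)
    then have i: "i < length cs" using len by simp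
    have IH: "pinv G ?F (Gs ! i)" using Suc.IH Suc.prems by simp
    have s: "fst (cs ! i) \<in> verts (Gs ! i)" "snd (cs ! i) \<in> verts (Gs ! i)"
      "fst (cs ! i) \<noteq> snd (cs ! i)"
      "Gs ! Suc i = contract (Gs ! i) (fst (cs ! i)) (snd (cs ! i))" using step i by auto
    have n: "\<forall>x\<in>?F. \<forall>y\<in>?F. \<not> involves_pair (fst (cs ! i), snd (cs ! i)) x y"
      using nf i by simp
    show ?case unfolding s(4) by (rule contract_inv[OF IH s(1) s(2) s(3) n])
  qed
  have injb: "inj_on b {1..6}" and inja: "inj_on a {1..6}" and FG: "?F \<subseteq> verts G"
    using fi by (auto simp: fence_in_def)
  have aF: "a ` {1..6} \<subseteq> ?F" and bF: "b ` {1..6} \<subseteq> ?F" by (auto simp: fence_verts_def)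
  have aG: "a ` {1..6} \<subseteq> verts G" and bG: "b ` {1..6} \<subseteq> verts G" using aF bF FG by auto
  have bX: "\<forall>i\<in>{1..6}. \<forall>z\<in>X. {b i, z} \<in> blk G" using ar by (simp add: attachment_rule_def)
  have aS: "\<forall>i\<in>{1..6}. \<forall>s\<in>S. {a i, s} \<in> blk G" using att by (simp add: attached_def)
  have bS: "\<forall>i\<in>{1..6}. \<forall>s\<in>S. \<not> adjacent G (b i) s" using att by (simp add: attached_def)
  have bN: "\<forall>i\<in>{1..6}. {z \<in> verts G - ?F. adjacent G (b i) z} = X" using ar by (simp add: attachment_rule_def)
  have aN: "\<forall>i\<in>{1..6}. {z \<in> verts G - ?F. adjacent G (a i) z} = X \<union> S" using ar by (simp add: attachment_rule_def)
  have bY: "\<forall>i\<in>{1..6}. \<forall>y\<in>Y. \<not> adjacent G (b i) y"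
  proof (intro ballI)
    fix i :: nat and y assume i: "i \<in> {1..6}" and y: "y \<in> Y"
    have "y \<in> verts G - ?F" "y \<notin> X" using y Ydef by auto
    then show "\<not> adjacent G (b i) y" using bN i by blast
  qed
  have aY: "\<forall>i\<in>{1..6}. \<forall>y\<in>Y. \<not> adjacent G (a i) y"
  proof (intro ballI)
    fix i :: nat and y assume i: "i \<in> {1..6}" and y: "y \<in> Y"
    have "y \<in> verts G - ?F" "y \<notin> X \<union> S" using y Ydef by auto
    then show "\<not> adjacent G (a i) y" using aN i by blast
  qed
  show ?thesis
  proof (intro ballI conjI notI)
    fix H P assume H: "H \<in> set Gs" and P: "P \<in> verts H"
    obtain i where i: "i < length Gs" "H = Gs ! i" using H by (metis in_set_conv_nth)
    have I: "pinv G ?F H" using inv i by simp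
    have d: "red_deg H P \<le> 4" using deg H P by blast
    {
      assume "P \<inter> X \<noteq> {} \<and> P \<inter> S \<noteq> {}"
      then obtain x s where "x \<in> P" "x \<in> X" "s \<in> P" "s \<in> S" by blast
      then have "5 \<le> red_deg H P" using red5[OF I fin P injb bF bG, of x s] bX bS by simp
      then show False using d by simp
    }
    {
      assume "P \<inter> Y \<noteq> {} \<and> P \<inter> S \<noteq> {}"
      then obtain y s where "y \<in> P" "y \<in> Y" "s \<in> P" "s \<in> S" by blast
      then have "5 \<le> red_deg H P" using red5[OF I fin P inja aF aG, of s y] aS aY by simp
      then show False using d by simp
    }
    {
      assume "P \<inter> X \<noteq> {} \<and> P \<inter> Y \<noteq> {}"
      then obtain x y where "x \<in> P" "x \<in> X" "y \<in> P" "y \<in> Y" by blast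
      then have "5 \<le> red_deg H P" using red5[OF I fin P injb bF bG, of x y] bX bY by simp
      then show False using d by simp
    }
  qed
qed


end
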